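(* Let $R>0$, let $D_R\subset\mathbb{R}^2$ be the disk of radius $R$ centered at the origin, let $1<\gamma<3$, and define $\alpha=\frac{3-\gamma}{2\gamma}$ and $\delta$ by $\frac{1}{\gamma}+\frac{1}{\delta}=1$. Then for every smooth non-negative function $\rho$ on the closed disk $\overline{D_R}$ and all $a,b>0$, $$ab\,\alpha\left|\int_{D_{R}}\left(\frac{1}{|x|}-\frac{2}{R}\right)\rho(x)\,\mathrm{d} x\right|\leq \frac{a^\gamma C(\gamma)}{\gamma}\int_{D_{R}}|\nabla\rho(x)^{\alpha}|^{\gamma}\,\mathrm{d} x+\frac{b^\delta C(\delta)}{\delta}\int_{D_{R}}\rho(x)^{3/2}\,\mathrm{d} x.$$
   Context: For $p>0$, $C(p)=2^{1-p/2}$ if $0<p\le 2$ and $C(p)=1$ if $p\ge 2$. *)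

theory Defs
  imports "HOL-Analysis.Analysis"
begin

definition Cconst :: "real \<Rightarrow> real" where
  "Cconst p = (if p \<le> 2 then 2 powr (1 - p / 2) else 1)"

fun higher_differentiable_on ::
  "nat \<Rightarrow> 'a::real_normed_vector set \<Rightarrow> ('a \<Rightarrow> 'b::real_normed_vector) \<Rightarrow> bool" where
  "higher_differentiable_on 0 S f = continuous_on S f"
| "higher_differentiable_on (Suc n) S f =
     (f differentiable_on S \<and>
      (\<forall>v. higher_differentiable_on n S (\<lambda>x. frechet_derivative f (at x) v)))"

definition smooth_on :: "'a::real_normed_vector set \<Rightarrow> ('a \<Rightarrow> 'b::real_normed_vector) \<Rightarrow> bool" where
  "smooth_on S f = (\<forall>n. higher_differentiable_on n S f)"

definition grad :: "(real^2 \<Rightarrow> real) \<Rightarrow> real^2 \<Rightarrow> real^2" where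
  "grad f x = (\<chi> i. frechet_derivative f (at x) (axis i 1))"

end

theory Submission
  imports Defs
begin

lemma sets_lborel_pair: "sets (lborel \<Otimes>\<^sub>M lborel) = sets (borel :: (real \<times> (real^2)) measure)"
  by (simp only: sets_pair_measure_cong[OF sets_lborel sets_lborel] borel_prod)

lemma swap_test:
  fixes f :: "real \<Rightarrow> real^2 \<Rightarrow> ennreal"
  assumes "case_prod f \<in> borel_measurable borel"
  shows "(\<integral>\<^sup>+y. \<integral>\<^sup>+s. f s y \<partial>lborel \<partial>lborel) = (\<integral>\<^sup>+s. \<integral>\<^sup>+y. f s y \<partial>lborel \<partial>lborel)"
  apply (rule lborel_pair.Fubini')
  by (subst measurable_cong_sets[OF sets_lborel_pair refl]) (rule assms)


lemma swap_test2:
  fixes f :: "real^2 \<Rightarrow> real \<Rightarrow> ennreal"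
  assumes "(\<lambda>(x,s). f x s) \<in> borel_measurable borel"
  shows "(\<integral>\<^sup>+s. \<integral>\<^sup>+x. f x s \<partial>lborel \<partial>lborel) = (\<integral>\<^sup>+x. \<integral>\<^sup>+s. f x s \<partial>lborel \<partial>lborel)"
  apply (rule lborel_pair.Fubini')
  by (subst measurable_cong_sets[OF sets_pair_measure_cong[OF sets_lborel sets_lborel] refl]) (simp add: borel_prod assms)

lemma nn_integral_scale2:
  fixes f :: "real^2 \<Rightarrow> ennreal" and c :: real
  assumes [measurable]: "f \<in> borel_measurable borel" and c: "c \<noteq> 0"
  shows "(\<integral>\<^sup>+x. f x \<partial>lborel) = ennreal (c^2) * (\<integral>\<^sup>+x. f (c *\<^sub>R x) \<partial>lborel)"
  by (subst lborel_affine[OF c, of 0]) (simp add: nn_integral_density nn_integral_distr nn_integral_cmult)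

lemma inv_sq_integral:
  fixes t R :: real assumes "0 < t" "t < R"
  shows "(\<integral>\<^sup>+s. indicator {t<..<R} s * ennreal (1/s^2) \<partial>lborel) = ennreal (1/t - 1/R)"
proof -
  have "((\<lambda>s. 1/s^2) has_integral ((-1/R) - (-1/t))) {t..R}"
  proof (rule fundamental_theorem_of_calculus)
    show "t \<le> R" using assms by simp
    fix s assume s: "s \<in> {t..R}"
    then have "s \<noteq> 0" using assms by auto
    then show "((\<lambda>s. -1/s) has_vector_derivative 1/s^2) (at s within {t..R})"
      by (auto intro!: derivative_eq_intros simp: has_real_derivative_iff_has_vector_derivative[symmetric] power2_eq_square)
  qed
  then have "((\<lambda>s. 1/s^2) has_integral (1/t - 1/R)) {t<..<R}"
    by (simp add: has_integral_Icc_iff_Ioo)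
  from nn_integral_has_integral_lebesgue'[OF _ this] show ?thesis
    by (simp add: mult.commute)
qed

lemma mtest:
  fixes \<phi> :: "real^2 \<Rightarrow> ennreal" assumes phi[measurable]: "\<phi> \<in> borel_measurable borel"
  shows "(\<lambda>(s,y). indicator {0<..<R} s * (indicator (ball (0::real^2) 1) y * \<phi> (s *\<^sub>R y))) \<in> borel_measurable (lborel \<Otimes>\<^sub>M lborel)"
proof -
  have [measurable]: "(\<lambda>x. fst x *\<^sub>R snd x :: real^2) \<in> (lborel \<Otimes>\<^sub>M lborel) \<rightarrow>\<^sub>M borel" by measurable
  have [measurable]: "(\<lambda>x. \<phi> (fst x *\<^sub>R snd x)) \<in> borel_measurable (lborel \<Otimes>\<^sub>M lborel)"
    by (rule measurable_compose[OF _ phi]) measurable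
  have "(\<lambda>(s,y). indicator {0<..<R} s * (indicator (ball (0::real^2) 1) y * \<phi> (s *\<^sub>R y))) =
        (\<lambda>(s,y). indicator {0<..<R} s * ((if norm y < 1 then 1 else 0) * \<phi> (s *\<^sub>R y)))"
    by (auto simp: fun_eq_iff indicator_def)
  also have "\<dots> \<in> borel_measurable (lborel \<Otimes>\<^sub>M lborel)" by measurable
  finally show ?thesis .
qed

lemma mtest2:
  fixes \<phi> :: "real^2 \<Rightarrow> ennreal" assumes phi[measurable]: "\<phi> \<in> borel_measurable borel"
  shows "(\<lambda>(x,s). indicator {0<..<R} s * ennreal (1/s^2) * (indicator (ball (0::real^2) s) x * \<phi> x)) \<in> borel_measurable (lborel \<Otimes>\<^sub>M lborel)"
proof -
  have "(\<lambda>(x,s). indicator {0<..<R} s * ennreal (1/s^2) * (indicator (ball (0::real^2) s) x * \<phi> x)) =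
        (\<lambda>(x,s). indicator {0<..<R} s * ennreal (1/s^2) * ((if norm x < s then 1 else 0) * \<phi> x))"
    by (auto simp: fun_eq_iff indicator_def)
  also have "\<dots> \<in> borel_measurable (lborel \<Otimes>\<^sub>M lborel)" by measurable
  finally show ?thesis .
qed


lemma ray_integral:
  fixes \<phi> :: "real^2 \<Rightarrow> ennreal" and R :: real
  assumes phi[measurable]: "\<phi> \<in> borel_measurable borel" and R: "R > 0"
  shows "(\<integral>\<^sup>+y. indicator (ball 0 1) y * (\<integral>\<^sup>+s. indicator {0<..<R} s * \<phi> (s *\<^sub>R y) \<partial>lborel) \<partial>lborel)
       = (\<integral>\<^sup>+x. indicator (ball 0 R) x * ennreal (1/norm x - 1/R) * \<phi> x \<partial>lborel)"
proof -
  have m1[measurable]: "(\<lambda>x. \<phi> (fst x *\<^sub>R snd x)) \<in> borel_measurable (lborel \<Otimes>\<^sub>M (lborel::(real^2) measure))"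
    by (rule measurable_compose[OF _ phi]) measurable
  have m1': "(\<lambda>s. \<phi> (s *\<^sub>R y)) \<in> borel_measurable lborel" for y :: "real^2"
    by (rule measurable_compose[OF _ phi]) measurable
  have "(\<integral>\<^sup>+y. indicator (ball 0 1) y * (\<integral>\<^sup>+s. indicator {0<..<R} s * \<phi> (s *\<^sub>R y) \<partial>lborel) \<partial>lborel)
      = (\<integral>\<^sup>+y. \<integral>\<^sup>+s. indicator {0<..<R} s * (indicator (ball (0::real^2) 1) y * \<phi> (s *\<^sub>R y)) \<partial>lborel \<partial>lborel)"
    by (intro nn_integral_cong, subst nn_integral_cmult[symmetric]) (auto intro!: nn_integral_cong simp: m1' mult_ac)
  also have "\<dots> = (\<integral>\<^sup>+s. \<integral>\<^sup>+y. indicator {0<..<R} s * (indicator (ball (0::real^2) 1) y * \<phi> (s *\<^sub>R y)) \<partial>lborel \<partial>lborel)"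
    by (rule lborel_pair.Fubini'[OF mtest[OF phi]])
  also have "\<dots> = (\<integral>\<^sup>+s. \<integral>\<^sup>+x. indicator {0<..<R} s * ennreal (1/s^2) * (indicator (ball (0::real^2) s) x * \<phi> x) \<partial>lborel \<partial>lborel)"
  proof (rule nn_integral_cong)
    fix s :: real
    show "(\<integral>\<^sup>+y. indicator {0<..<R} s * (indicator (ball (0::real^2) 1) y * \<phi> (s *\<^sub>R y)) \<partial>lborel)
        = (\<integral>\<^sup>+x. indicator {0<..<R} s * ennreal (1/s^2) * (indicator (ball (0::real^2) s) x * \<phi> x) \<partial>lborel)"
    proof (cases "s \<in> {0<..<R}")
      case False then show ?thesis by simp
    next
      case True
      then have s: "s > 0" by simp
      have mb[measurable]: "(\<lambda>x. indicator (ball (0::real^2) s) x * \<phi> x) \<in> borel_measurable borel"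
      proof -
        have [measurable]: "ball (0::real^2) s \<in> sets borel" by simp
        show ?thesis by measurable
      qed
      have "(\<integral>\<^sup>+x. indicator (ball (0::real^2) s) x * \<phi> x \<partial>lborel)
          = ennreal (s^2) * (\<integral>\<^sup>+y. indicator (ball (0::real^2) s) (s *\<^sub>R y) * \<phi> (s *\<^sub>R y) \<partial>lborel)"
        using nn_integral_scale2[OF mb, of s] s by simp
      also have "(\<lambda>y. indicator (ball (0::real^2) s) (s *\<^sub>R y) * \<phi> (s *\<^sub>R y)) = (\<lambda>y. indicator (ball (0::real^2) 1) y * \<phi> (s *\<^sub>R y))"
        using s by (auto simp: fun_eq_iff indicator_def)
      finally have eq: "(\<integral>\<^sup>+x. indicator (ball (0::real^2) s) x * \<phi> x \<partial>lborel)
          = ennreal (s^2) * (\<integral>\<^sup>+y. indicator (ball (0::real^2) 1) y * \<phi> (s *\<^sub>R y) \<partial>lborel)" .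
      have "(\<integral>\<^sup>+x. indicator {0<..<R} s * ennreal (1/s^2) * (indicator (ball (0::real^2) s) x * \<phi> x) \<partial>lborel)
          = ennreal (1/s^2) * (\<integral>\<^sup>+x. indicator (ball (0::real^2) s) x * \<phi> x \<partial>lborel)"
        using True by (simp add: nn_integral_cmult)
      also have "\<dots> = (ennreal (1/s^2) * ennreal (s^2)) * (\<integral>\<^sup>+y. indicator (ball (0::real^2) 1) y * \<phi> (s *\<^sub>R y) \<partial>lborel)"
        by (simp add: eq mult.assoc)
      also have "ennreal (1/s^2) * ennreal (s^2) = 1"
        using s by (simp add: ennreal_mult'[symmetric])
      finally show ?thesis using True
        by (simp add: nn_integral_cmult[symmetric])
    qed
  qed
  also have "\<dots> = (\<integral>\<^sup>+x. \<integral>\<^sup>+s. indicator {0<..<R} s * ennreal (1/s^2) * (indicator (ball (0::real^2) s) x * \<phi> x) \<partial>lborel \<partial>lborel)"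
    by (rule lborel_pair.Fubini'[OF mtest2[OF phi]])
  also have "\<dots> = (\<integral>\<^sup>+x. indicator (ball 0 R) x * ennreal (1/norm x - 1/R) * \<phi> x \<partial>lborel)"
  proof (rule nn_integral_cong_AE)
    show "AE x in lborel. (\<integral>\<^sup>+s. indicator {0<..<R} s * ennreal (1/s^2) * (indicator (ball (0::real^2) s) x * \<phi> x) \<partial>lborel)
        = indicator (ball 0 R) x * ennreal (1/norm x - 1/R) * \<phi> x"
      using AE_lborel_singleton[of "0::real^2"]
    proof eventually_elim
      case (elim x)
      have "(\<integral>\<^sup>+s. indicator {0<..<R} s * ennreal (1/s^2) * (indicator (ball (0::real^2) s) x * \<phi> x) \<partial>lborel)
          = (\<integral>\<^sup>+s. (indicator {norm x<..<R} s * ennreal (1/s^2)) * \<phi> x \<partial>lborel)"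
        by (intro nn_integral_cong) (auto simp: indicator_def dest: order.strict_trans1[OF norm_ge_zero])
      also have "\<dots> = (\<integral>\<^sup>+s. indicator {norm x<..<R} s * ennreal (1/s^2) \<partial>lborel) * \<phi> x"
        by (simp add: nn_integral_multc)
      also have "(\<integral>\<^sup>+s. indicator {norm x<..<R} s * ennreal (1/s^2) \<partial>lborel) = indicator (ball 0 R) x * ennreal (1/norm x - 1/R)"
      proof (cases "norm x < R")
        case True then show ?thesis using inv_sq_integral[of "norm x" R] elim by simp
      next
        case False then show ?thesis by simp
      qed
      finally show ?case .
    qed
  qed
  finally show ?thesis .
qed


lemma ray_1d:
  fixes \<rho> :: "real^2 \<Rightarrow> real" and D :: "real^2 \<Rightarrow> real^2 \<Rightarrow> real" and R :: real and y :: "real^2"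
  assumes R: "R > 0" and y: "norm y < 1"
    and der: "\<And>x. x \<in> ball 0 R \<Longrightarrow> (\<rho> has_derivative D x) (at x)"
    and contD: "continuous_on (ball 0 R) (\<lambda>x. D x y)"
    and cont: "continuous_on (ball 0 R) \<rho>"
    and nonneg: "\<And>x. x \<in> ball 0 R \<Longrightarrow> \<rho> x \<ge> 0"
  shows "(\<integral>\<^sup>+s. indicator {0<..<R} s * ennreal (\<rho> (s *\<^sub>R y)) \<partial>lborel)
           \<le> ennreal (R * \<rho> (R *\<^sub>R y)) + (\<integral>\<^sup>+s. indicator {0<..<R} s * ennreal \<bar>D (s *\<^sub>R y) (s *\<^sub>R y)\<bar> \<partial>lborel)"
    and "ennreal (R * \<rho> (R *\<^sub>R y))
           \<le> (\<integral>\<^sup>+s. indicator {0<..<R} s * ennreal (\<rho> (s *\<^sub>R y)) \<partial>lborel) + (\<integral>\<^sup>+s. indicator {0<..<R} s * ennreal \<bar>D (s *\<^sub>R y) (s *\<^sub>R y)\<bar> \<partial>lborel)"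
proof -
  have inb: "s *\<^sub>R y \<in> ball 0 R" if "s \<in> {0..R}" for s
  proof -
    have "norm (s *\<^sub>R y) = s * norm y" using that by simp
    also have "\<dots> \<le> R * norm y" using that by (intro mult_right_mono) auto
    also have "\<dots> < R" using R y by simp
    finally show ?thesis by simp
  qed
  have lin: "linear (D x)" if "x \<in> ball 0 R" for x
    using der[OF that] has_derivative_linear by blast
  have dg: "((\<lambda>s. \<rho> (s *\<^sub>R y)) has_derivative (\<lambda>h. h * D (s *\<^sub>R y) y)) (at s)" if "s \<in> {0..R}" for s
  proof -
    have "((\<lambda>s. \<rho> (s *\<^sub>R y)) has_derivative (\<lambda>h. D (s *\<^sub>R y) (h *\<^sub>R y))) (at s)"
      by (rule has_derivative_compose[where f="\<lambda>s. s *\<^sub>R y", OF _ der[OF inb[OF that]]])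
         (auto intro!: derivative_eq_intros)
    moreover have "(\<lambda>h. D (s *\<^sub>R y) (h *\<^sub>R y)) = (\<lambda>h. h * D (s *\<^sub>R y) y)"
      using linear_scale[OF lin[OF inb[OF that]]] by auto
    ultimately show ?thesis by simp
  qed
  have cg: "continuous_on {0..R} (\<lambda>s. \<rho> (s *\<^sub>R y))"
    by (rule continuous_on_compose2[OF cont]) (auto intro!: continuous_intros inb)
  have cg': "continuous_on {0..R} (\<lambda>s. D (s *\<^sub>R y) y)"
    by (rule continuous_on_compose2[OF contD]) (auto intro!: continuous_intros inb)
  have "((\<lambda>s. \<rho> (s *\<^sub>R y) + s * D (s *\<^sub>R y) y) has_integral (R * \<rho> (R *\<^sub>R y) - 0 * \<rho> (0 *\<^sub>R y))) {0..R}"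
  proof (rule fundamental_theorem_of_calculus)
    show "0 \<le> R" using R by simp
    fix s assume s: "s \<in> {0..R}"
    have "((\<lambda>s. s * \<rho> (s *\<^sub>R y)) has_derivative (\<lambda>h. s * (h * D (s *\<^sub>R y) y) + h * \<rho> (s *\<^sub>R y))) (at s)"
      by (rule has_derivative_mult[OF has_derivative_ident dg[OF s], simplified])
    then have "((\<lambda>s. s * \<rho> (s *\<^sub>R y)) has_real_derivative (\<rho> (s *\<^sub>R y) + s * D (s *\<^sub>R y) y)) (at s)"
      unfolding has_field_derivative_def by (rule has_derivative_eq_rhs) (auto simp: algebra_simps)
    then show "((\<lambda>s. s * \<rho> (s *\<^sub>R y)) has_vector_derivative (\<rho> (s *\<^sub>R y) + s * D (s *\<^sub>R y) y)) (at s within {0..R})"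
      by (simp add: has_real_derivative_iff_has_vector_derivative[symmetric] has_field_derivative_at_within)
  qed
  then have h1: "((\<lambda>s. \<rho> (s *\<^sub>R y) + s * D (s *\<^sub>R y) y) has_integral (R * \<rho> (R *\<^sub>R y))) {0..R}" by simp
  define I where "I = integral {0..R} (\<lambda>s. \<rho> (s *\<^sub>R y))"
  have hI: "((\<lambda>s. \<rho> (s *\<^sub>R y)) has_integral I) {0..R}"
    unfolding I_def using integrable_continuous_real[OF cg] by (simp add: integrable_integral)
  have h2: "((\<lambda>s. s * D (s *\<^sub>R y) y) has_integral (R * \<rho> (R *\<^sub>R y) - I)) {0..R}"
    using has_integral_diff[OF h1 hI] by simp
  define J where "J = integral {0..R} (\<lambda>s. \<bar>D (s *\<^sub>R y) (s *\<^sub>R y)\<bar>)"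
  have absEq: "\<bar>D (s *\<^sub>R y) (s *\<^sub>R y)\<bar> = \<bar>s * D (s *\<^sub>R y) y\<bar>" if "s \<in> {0..R}" for s
    using linear_scale[OF lin[OF inb[OF that]]] by simp
  have cJ: "continuous_on {0..R} (\<lambda>s. \<bar>s * D (s *\<^sub>R y) y\<bar>)"
    by (intro continuous_intros cg')
  have hJ: "((\<lambda>s. \<bar>D (s *\<^sub>R y) (s *\<^sub>R y)\<bar>) has_integral J) {0..R}"
  proof -
    have "((\<lambda>s. \<bar>s * D (s *\<^sub>R y) y\<bar>) has_integral integral {0..R} (\<lambda>s. \<bar>s * D (s *\<^sub>R y) y\<bar>)) {0..R}"
      using integrable_continuous_real[OF cJ] by (simp add: integrable_integral)
    then have "((\<lambda>s. \<bar>D (s *\<^sub>R y) (s *\<^sub>R y)\<bar>) has_integral integral {0..R} (\<lambda>s. \<bar>s * D (s *\<^sub>R y) y\<bar>)) {0..R}"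
      by (rule has_integral_eq[rotated]) (simp add: absEq)
    then show ?thesis unfolding J_def by (simp add: integral_unique)
  qed
  have le1: "R * \<rho> (R *\<^sub>R y) - I \<le> J"
    by (rule has_integral_le[OF h2 hJ]) (simp add: absEq)
  have le2: "- (R * \<rho> (R *\<^sub>R y) - I) \<le> J"
    by (rule has_integral_le[OF has_integral_neg[OF h2] hJ]) (simp add: absEq)
  have nnI: "(\<integral>\<^sup>+s. indicator {0<..<R} s * ennreal (\<rho> (s *\<^sub>R y)) \<partial>lborel) = ennreal I"
    using nn_integral_has_integral_lebesgue'[of "{0<..<R}" "\<lambda>s. \<rho> (s *\<^sub>R y)" I] hI inb nonneg
    by (auto simp: has_integral_Icc_iff_Ioo mult.commute)
  have nnJ: "(\<integral>\<^sup>+s. indicator {0<..<R} s * ennreal \<bar>D (s *\<^sub>R y) (s *\<^sub>R y)\<bar> \<partial>lborel) = ennreal J"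
    using nn_integral_has_integral_lebesgue'[of "{0<..<R}" "\<lambda>s. \<bar>D (s *\<^sub>R y) (s *\<^sub>R y)\<bar>" J] hJ
    by (auto simp: has_integral_Icc_iff_Ioo mult.commute)
  have I0: "I \<ge> 0"
    by (rule has_integral_nonneg[OF hI]) (use inb nonneg in auto)
  have J0: "J \<ge> 0"
    by (rule has_integral_nonneg[OF hJ]) auto
  have P0: "R * \<rho> (R *\<^sub>R y) \<ge> 0"
    using R nonneg[OF inb[of R]] by simp
  show "(\<integral>\<^sup>+s. indicator {0<..<R} s * ennreal (\<rho> (s *\<^sub>R y)) \<partial>lborel)
           \<le> ennreal (R * \<rho> (R *\<^sub>R y)) + (\<integral>\<^sup>+s. indicator {0<..<R} s * ennreal \<bar>D (s *\<^sub>R y) (s *\<^sub>R y)\<bar> \<partial>lborel)"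
    unfolding nnI nnJ ennreal_plus[OF P0 J0, symmetric] by (rule ennreal_leI) (use le2 in linarith)
  show "ennreal (R * \<rho> (R *\<^sub>R y))
           \<le> (\<integral>\<^sup>+s. indicator {0<..<R} s * ennreal (\<rho> (s *\<^sub>R y)) \<partial>lborel) + (\<integral>\<^sup>+s. indicator {0<..<R} s * ennreal \<bar>D (s *\<^sub>R y) (s *\<^sub>R y)\<bar> \<partial>lborel)"
    unfolding nnI nnJ ennreal_plus[OF I0 J0, symmetric] by (rule ennreal_leI) (use le1 in linarith)
qed


lemma smooth_facts:
  fixes \<rho> :: "'a::real_normed_vector \<Rightarrow> real"
  assumes "smooth_on U \<rho>" "open U"
  shows "continuous_on U \<rho>"
    and "\<And>x. x \<in> U \<Longrightarrow> (\<rho> has_derivative frechet_derivative \<rho> (at x)) (at x)"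
    and "\<And>v. continuous_on U (\<lambda>x. frechet_derivative \<rho> (at x) v)"
proof -
  have h: "higher_differentiable_on (Suc 0) U \<rho>" using assms(1) unfolding smooth_on_def by blast
  then have d: "\<rho> differentiable_on U" and c: "\<forall>v. continuous_on U (\<lambda>x. frechet_derivative \<rho> (at x) v)"
    by simp_all
  show "continuous_on U \<rho>" using d differentiable_imp_continuous_on by blast
  show "\<And>x. x \<in> U \<Longrightarrow> (\<rho> has_derivative frechet_derivative \<rho> (at x)) (at x)"
    using d assms(2) by (metis differentiable_on_eq_differentiable_at frechet_derivative_works)
  show "\<And>v. continuous_on U (\<lambda>x. frechet_derivative \<rho> (at x) v)" using c by blast
qed

lemma lin_grad:
  fixes f :: "real^2 \<Rightarrow> real"
  assumes "linear f"
  shows "f v = v \<bullet> (\<chi> i. f (axis i 1))"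
proof -
  have "f v = f (\<Sum>i\<in>UNIV. (v$i) *s axis i 1)" by (simp add: basis_expansion)
  also have "\<dots> = (\<Sum>i\<in>UNIV. v$i * f (axis i 1))"
    using assms by (simp add: linear_sum linear_scale scalar_mult_eq_scaleR)
  also have "\<dots> = v \<bullet> (\<chi> i. f (axis i 1))" by (simp add: inner_vec_def)
  finally show ?thesis .
qed

lemma grad_powr:
  fixes \<rho> :: "real^2 \<Rightarrow> real" and \<alpha> :: real
  assumes d: "(\<rho> has_derivative D) (at x)" and pos: "\<rho> x > 0"
  shows "grad (\<lambda>y. \<rho> y powr \<alpha>) x = (\<alpha> * \<rho> x powr (\<alpha> - 1)) *\<^sub>R grad \<rho> x"
proof -
  have "((\<lambda>y. \<rho> y powr \<alpha>) has_derivative (\<lambda>h. \<alpha> * \<rho> x powr (\<alpha> - 1) * D h)) (at x)"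
    using has_derivative_powr[OF d has_derivative_const pos, of \<alpha>, simplified]
    by (rule has_derivative_eq_rhs) (use pos in \<open>auto simp: fun_eq_iff powr_diff field_simps\<close>)
  then have e1: "frechet_derivative (\<lambda>y. \<rho> y powr \<alpha>) (at x) = (\<lambda>h. \<alpha> * \<rho> x powr (\<alpha> - 1) * D h)"
    by (simp add: frechet_derivative_at[symmetric])
  have e2: "frechet_derivative \<rho> (at x) = D" using d by (simp add: frechet_derivative_at[symmetric])
  show ?thesis unfolding grad_def e1 e2 by (simp add: vec_eq_iff)
qed

lemma grad_zero_at_min:
  fixes \<rho> :: "real^2 \<Rightarrow> real"
  assumes d: "(\<rho> has_derivative D) (at x)" and "open V" "x \<in> V" "\<And>y. y \<in> V \<Longrightarrow> \<rho> y \<ge> 0" "\<rho> x = 0"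
  shows "grad \<rho> x = 0"
proof -
  have "eventually (\<lambda>y. y \<in> V) (at x)" using assms eventually_at_topological by blast
  then have "eventually (\<lambda>y. \<rho> x \<le> \<rho> y) (at x)" by eventually_elim (use assms in auto)
  from has_derivative_local_min[OF d this] have "D = (\<lambda>h. 0)" .
  moreover have "frechet_derivative \<rho> (at x) = D" using d by (simp add: frechet_derivative_at[symmetric])
  ultimately show ?thesis by (simp add: grad_def vec_eq_iff)
qed

lemma young_pt:
  fixes a b u v \<gamma> :: real
  assumes "a > 0" "b > 0" "u \<ge> 0" "v \<ge> 0" "1 < \<gamma>"
  shows "(a * u) * (b * v) \<le> a powr \<gamma> / \<gamma> * u powr \<gamma> + b powr (\<gamma>/(\<gamma>-1)) / (\<gamma>/(\<gamma>-1)) * v powr (\<gamma>/(\<gamma>-1))"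
proof -
  have "(a * u) * (b * v) \<le> (a * u) powr \<gamma> / \<gamma> + (b * v) powr (\<gamma>/(\<gamma>-1)) / (\<gamma>/(\<gamma>-1))"
    by (rule Youngs_inequality) (use assms in \<open>auto simp: field_simps\<close>)
  also have "\<dots> = a powr \<gamma> / \<gamma> * u powr \<gamma> + b powr (\<gamma>/(\<gamma>-1)) / (\<gamma>/(\<gamma>-1)) * v powr (\<gamma>/(\<gamma>-1))"
    using assms by (simp add: powr_mult)
  finally show ?thesis .
qed

lemma Cconst_ge1: "p > 0 \<Longrightarrow> Cconst p \<ge> 1"
  by (simp add: Cconst_def ge_one_powr_ge_zero)



lemma main_ineq:
  fixes R \<gamma> \<alpha> \<delta> a b :: real and \<rho> :: "real^2 \<Rightarrow> real"
  assumes R: "R > 0" and g1: "1 < \<gamma>" and g3: "\<gamma> < 3"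
    and Uex: "\<exists>U. open U \<and> cball 0 R \<subseteq> U \<and> smooth_on U \<rho>"
    and nn: "\<forall>x\<in>cball 0 R. \<rho> x \<ge> 0"
    and al: "\<alpha> = (3 - \<gamma>) / (2 * \<gamma>)" and de: "\<delta> = \<gamma> / (\<gamma> - 1)"
    and a: "a > 0" and b: "b > 0"
  shows "ennreal (a * b * \<alpha> * \<bar>LINT x:ball 0 R|lborel. (1 / norm x - 2 / R) * \<rho> x\<bar>)
      \<le> ennreal (a powr \<gamma> * Cconst \<gamma> / \<gamma>) *
          (\<integral>\<^sup>+ x\<in>ball 0 R. ennreal (if \<rho> x > 0
               then norm (grad (\<lambda>y. \<rho> y powr \<alpha>) x) powr \<gamma> else 0) \<partial>lborel)
        + ennreal (b powr \<delta> * Cconst \<delta> / \<delta>) *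
          (\<integral>\<^sup>+ x\<in>ball 0 R. ennreal (\<rho> x powr (3/2)) \<partial>lborel)"
proof -
  obtain U where U: "open U" "cball 0 R \<subseteq> U" "smooth_on U \<rho>" using Uex by blast
  have BU: "ball 0 R \<subseteq> U" using U(2) ball_subset_cball by blast
  note sf = smooth_facts[OF U(3) U(1)]
  have contC: "continuous_on (cball 0 R) \<rho>" using continuous_on_subset[OF sf(1) U(2)] .
  have contB: "continuous_on (ball 0 R) \<rho>" using continuous_on_subset[OF sf(1) BU] .
  have der: "\<And>x. x \<in> ball 0 R \<Longrightarrow> (\<rho> has_derivative frechet_derivative \<rho> (at x)) (at x)"
    using sf(2) BU by blast
  have contDB: "\<And>v. continuous_on (ball 0 R) (\<lambda>x. frechet_derivative \<rho> (at x) v)"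
    using continuous_on_subset[OF sf(3) BU] by blast
  have nonneg: "\<And>x. x \<in> ball 0 R \<Longrightarrow> \<rho> x \<ge> 0" using nn by auto
  have contgC: "continuous_on (cball 0 R) (grad \<rho>)"
    unfolding grad_def by (intro continuous_on_vec_lambda continuous_on_subset[OF sf(3) U(2)])
  have contgB: "continuous_on (ball 0 R) (grad \<rho>)"
    using continuous_on_subset[OF contgC ball_subset_cball] .
  have Dx: "frechet_derivative \<rho> (at x) v = v \<bullet> grad \<rho> x" if "x \<in> ball 0 R" for x v
    unfolding grad_def by (rule lin_grad) (use der[OF that] has_derivative_linear in blast)
  obtain M1 where M1: "\<And>x. x \<in> cball 0 R \<Longrightarrow> norm (\<rho> x) \<le> M1"
    using compact_imp_bounded[OF compact_continuous_image[OF contC compact_cball]]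
    unfolding bounded_iff by blast
  obtain M2 where M2: "\<And>x. x \<in> cball 0 R \<Longrightarrow> norm (grad \<rho> x) \<le> M2"
    using compact_imp_bounded[OF compact_continuous_image[OF contgC compact_cball]]
    unfolding bounded_iff by blast

  define \<rho>r where "\<rho>r x = indicator (ball 0 R) x * \<rho> x" for x
  define gr where "gr x = indicator (ball 0 R) x *\<^sub>R grad \<rho> x" for x
  have m\<rho>r[measurable]: "\<rho>r \<in> borel_measurable borel"
    using borel_measurable_continuous_on_indicator[OF _ contB] unfolding \<rho>r_def by simp
  have mgr[measurable]: "gr \<in> borel_measurable borel"
    using borel_measurable_continuous_on_indicator[OF _ contgB] unfolding gr_def by simp
  have \<rho>r0: "\<rho>r x \<ge> 0" for x using nonneg by (simp add: \<rho>r_def indicator_def)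

  have rfin: "\<rho>r x \<le> max M1 0" for x
  proof (cases "x \<in> ball 0 R")
    case True then have "\<rho> x \<le> M1" using M1[of x] by (auto simp: abs_le_iff)
    then show ?thesis using True by (simp add: \<rho>r_def)
  qed (simp add: \<rho>r_def)
  have gfin: "norm (gr x) \<le> max M2 0" for x
  proof (cases "x \<in> ball 0 R")
    case True then have "norm (grad \<rho> x) \<le> M2" using M2[of x] by auto
    then show ?thesis using True by (simp add: gr_def)
  qed (simp add: gr_def)
  have \<rho>r_out: "\<And>x. x \<notin> ball 0 R \<Longrightarrow> \<rho>r x = 0" by (simp add: \<rho>r_def)
  have gr_out: "\<And>x. x \<notin> ball 0 R \<Longrightarrow> gr x = 0" by (simp add: gr_def)
  have \<rho>r_in: "\<And>x. x \<in> ball 0 R \<Longrightarrow> \<rho>r x = \<rho> x" by (simp add: \<rho>r_def)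
  have gr_in: "\<And>x. x \<in> ball 0 R \<Longrightarrow> gr x = grad \<rho> x" by (simp add: gr_def)
  have finB: "emeasure lborel (ball (0::real^2) R) < \<infinity>" by (rule emeasure_bounded_finite) simp
  have fin_bound: "(\<integral>\<^sup>+x. ennreal (f x) \<partial>lborel) < \<infinity>"
    if "\<And>x. f x \<le> indicator (ball 0 R) x * M" for f :: "real^2 \<Rightarrow> real" and M :: real
  proof -
    have "(\<integral>\<^sup>+x. ennreal (f x) \<partial>lborel) \<le> (\<integral>\<^sup>+x. ennreal M * indicator (ball (0::real^2) R) x \<partial>lborel)"
    proof (intro nn_integral_mono)
      fix x :: "real^2"
      show "ennreal (f x) \<le> ennreal M * indicator (ball 0 R) x"
        using that[of x] by (cases "x \<in> ball 0 R") (auto intro: ennreal_leI simp: ennreal_neg)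
    qed
    also have "\<dots> = ennreal M * emeasure lborel (ball (0::real^2) R)" by (rule nn_integral_cmult_indicator) simp
    also have "\<dots> < \<infinity>" using finB by (simp add: ennreal_mult_less_top)
    finally show ?thesis .
  qed

  define A where "A = (\<integral>\<^sup>+x. indicator (ball 0 R) x * ennreal (1/norm x - 1/R) * ennreal (\<rho>r x) \<partial>lborel)"
  define E where "E = (\<integral>\<^sup>+x. indicator (ball 0 R) x * ennreal (1/norm x - 1/R) * ennreal \<bar>x \<bullet> gr x\<bar> \<partial>lborel)"
  define P where "P = (\<integral>\<^sup>+x. ennreal (\<rho>r x) \<partial>lborel)"
  define Q where "Q = (\<integral>\<^sup>+y. ennreal (R * \<rho>r (R *\<^sub>R y)) \<partial>lborel)"
  define G1 where "G1 = (\<integral>\<^sup>+x. ennreal (norm (gr x)) \<partial>lborel)"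

  define in1 where "in1 y = (\<integral>\<^sup>+s. indicator {0<..<R} s * ennreal (\<rho>r (s *\<^sub>R y)) \<partial>lborel)" for y :: "real^2"
  define in2 where "in2 y = (\<integral>\<^sup>+s. indicator {0<..<R} s * ennreal \<bar>(s *\<^sub>R y) \<bullet> gr (s *\<^sub>R y)\<bar> \<partial>lborel)" for y :: "real^2"
  have rayA: "A = (\<integral>\<^sup>+y. indicator (ball 0 1) y * in1 y \<partial>lborel)"
    unfolding A_def in1_def by (rule ray_integral[symmetric]) (use R in auto)
  have rayE: "E = (\<integral>\<^sup>+y. indicator (ball 0 1) y * in2 y \<partial>lborel)"
    unfolding E_def in2_def by (rule ray_integral[symmetric]) (use R in auto)
  have inb: "s *\<^sub>R y \<in> ball 0 R" if "norm y < 1" "0 \<le> s" "s \<le> R" for y :: "real^2" and s :: real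
  proof -
    have "norm (s *\<^sub>R y) = s * norm y" using that by simp
    also have "\<dots> \<le> R * norm y" using that by (intro mult_right_mono) auto
    also have "\<dots> < R" using R that by simp
    finally show ?thesis by simp
  qed
  have outb: "\<rho>r (R *\<^sub>R y) = 0" if "\<not> norm y < 1" for y :: "real^2"
  proof -
    have "norm (R *\<^sub>R y) = R * norm y" using R by simp
    also have "R * norm y \<ge> R" using R that by simp
    finally show ?thesis by (intro \<rho>r_out) simp
  qed
  have pts: "indicator (ball 0 1) y * in1 y \<le> ennreal (R * \<rho>r (R *\<^sub>R y)) + indicator (ball 0 1) y * in2 y
           \<and> ennreal (R * \<rho>r (R *\<^sub>R y)) \<le> indicator (ball 0 1) y * in1 y + indicator (ball 0 1) y * in2 y" for y :: "real^2"
  proof (cases "norm y < 1")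
    case False then show ?thesis using outb[OF False] by simp
  next
    case True
    have e1: "in1 y = (\<integral>\<^sup>+s. indicator {0<..<R} s * ennreal (\<rho> (s *\<^sub>R y)) \<partial>lborel)"
      unfolding in1_def by (intro nn_integral_cong) (auto simp: indicator_def \<rho>r_in[OF inb[OF True]])
    have e2: "in2 y = (\<integral>\<^sup>+s. indicator {0<..<R} s * ennreal \<bar>frechet_derivative \<rho> (at (s *\<^sub>R y)) (s *\<^sub>R y)\<bar> \<partial>lborel)"
      unfolding in2_def by (intro nn_integral_cong) (auto simp: indicator_def gr_in[OF inb[OF True]] Dx[OF inb[OF True]])
    have e3: "\<rho>r (R *\<^sub>R y) = \<rho> (R *\<^sub>R y)" using inb[OF True, of R] R by (simp add: \<rho>r_in)
    note r = ray_1d[OF R True der contDB contB nonneg]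
    show ?thesis using True r unfolding e1 e2 e3 by simp
  qed
  have mpair: "(\<lambda>(y, s). indicator {0<..<R} s * ennreal \<bar>(s *\<^sub>R y) \<bullet> gr (s *\<^sub>R y)\<bar>) \<in> borel_measurable (lborel \<Otimes>\<^sub>M (lborel :: real measure))"
  proof -
    have [measurable]: "(\<lambda>x. snd x *\<^sub>R fst x :: real^2) \<in> (lborel \<Otimes>\<^sub>M (lborel :: real measure)) \<rightarrow>\<^sub>M borel" by measurable
    have [measurable]: "(\<lambda>x. gr (snd x *\<^sub>R fst x)) \<in> borel_measurable (lborel \<Otimes>\<^sub>M (lborel :: real measure))"
      by (rule measurable_compose[OF _ mgr]) measurable
    show ?thesis by measurable
  qed
  have mpair1: "(\<lambda>(y, s). indicator {0<..<R} s * ennreal (\<rho>r (s *\<^sub>R y))) \<in> borel_measurable (lborel \<Otimes>\<^sub>M (lborel :: real measure))"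
  proof -
    have [measurable]: "(\<lambda>x. snd x *\<^sub>R fst x :: real^2) \<in> (lborel \<Otimes>\<^sub>M (lborel :: real measure)) \<rightarrow>\<^sub>M borel" by measurable
    have [measurable]: "(\<lambda>x. \<rho>r (snd x *\<^sub>R fst x)) \<in> borel_measurable (lborel \<Otimes>\<^sub>M (lborel :: real measure))"
      by (rule measurable_compose[OF _ m\<rho>r]) measurable
    show ?thesis by measurable
  qed
  have min2[measurable]: "in2 \<in> borel_measurable borel"
    using lborel.borel_measurable_nn_integral[OF mpair] unfolding in2_def by simp
  have min1[measurable]: "in1 \<in> borel_measurable borel"
    using lborel.borel_measurable_nn_integral[OF mpair1] unfolding in1_def by simp
  have [measurable]: "ball (0::real^2) 1 \<in> sets borel" by simp
  have mQ[measurable]: "(\<lambda>y. ennreal (R * \<rho>r (R *\<^sub>R y))) \<in> borel_measurable lborel" by measurable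
  have AQE: "A \<le> Q + E"
  proof -
    have "A \<le> (\<integral>\<^sup>+y. ennreal (R * \<rho>r (R *\<^sub>R y)) + indicator (ball 0 1) y * in2 y \<partial>lborel)"
      unfolding rayA by (intro nn_integral_mono) (use pts in blast)
    also have "\<dots> = Q + E" unfolding Q_def rayE by (rule nn_integral_add) measurable
    finally show ?thesis .
  qed
  have QAE: "Q \<le> A + E"
  proof -
    have "Q \<le> (\<integral>\<^sup>+y. indicator (ball 0 1) y * in1 y + indicator (ball 0 1) y * in2 y \<partial>lborel)"
      unfolding Q_def by (intro nn_integral_mono) (use pts in blast)
    also have "\<dots> = A + E" unfolding rayA rayE by (rule nn_integral_add) measurable
    finally show ?thesis .
  qed
  have PQ: "P = ennreal R * Q"
  proof -
    have P': "P = ennreal (R^2) * (\<integral>\<^sup>+y. ennreal (\<rho>r (R *\<^sub>R y)) \<partial>lborel)"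
      unfolding P_def by (rule nn_integral_scale2) (use R in auto)
    have Q': "Q = ennreal R * (\<integral>\<^sup>+y. ennreal (\<rho>r (R *\<^sub>R y)) \<partial>lborel)"
      unfolding Q_def using R \<rho>r0 by (simp add: ennreal_mult nn_integral_cmult)
    show ?thesis unfolding P' Q' using R by (simp add: ennreal_mult power2_eq_square mult.assoc)
  qed
  have EG: "E \<le> G1"
    unfolding E_def G1_def
  proof (intro nn_integral_mono)
    fix x :: "real^2"
    show "indicator (ball 0 R) x * ennreal (1/norm x - 1/R) * ennreal \<bar>x \<bullet> gr x\<bar> \<le> ennreal (norm (gr x))"
    proof (cases "x \<in> ball 0 R \<and> x \<noteq> 0")
      case False
      then have "x \<notin> ball 0 R \<or> x = 0" by blast
      then show ?thesis
      proof
        assume "x \<notin> ball 0 R" then show ?thesis by simp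
      next
        assume "x = 0" then show ?thesis using R by (simp add: ennreal_neg)
      qed
    next
      case True
      then have nx: "0 < norm x" "norm x < R" by auto
      have w0: "0 \<le> 1/norm x - 1/R" using nx R by (simp add: field_simps)
      have "(1/norm x - 1/R) * \<bar>x \<bullet> gr x\<bar> \<le> (1/norm x - 1/R) * (norm x * norm (gr x))"
        by (rule mult_left_mono[OF Cauchy_Schwarz_ineq2 w0])
      also have "\<dots> = (1 - norm x / R) * norm (gr x)" using nx by (simp add: field_simps)
      also have "\<dots> \<le> 1 * norm (gr x)" using R by (intro mult_right_mono) auto
      finally have "(1/norm x - 1/R) * \<bar>x \<bullet> gr x\<bar> \<le> norm (gr x)" by simp
      then show ?thesis using True w0 by (simp add: ennreal_mult[symmetric] ennreal_leI)
    qed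
  qed
  have Pfin: "P < \<infinity>"
    unfolding P_def by (rule fin_bound[where M="max M1 0"]) (use rfin \<rho>r_out in \<open>auto simp: indicator_def\<close>)
  have G1fin: "G1 < \<infinity>"
    unfolding G1_def by (rule fin_bound[where M="max M2 0"]) (use gfin gr_out in \<open>auto simp: indicator_def\<close>)
  have Qfin: "Q < \<infinity>" using Pfin PQ R by (auto simp: ennreal_mult_less_top top.not_eq_extremum)
  have Efin: "E < \<infinity>" using EG G1fin by simp
  have Afin: "A < \<infinity>" using AQE Qfin Efin by (simp add: order.strict_trans1)
  define LI where "LI = (LINT x:ball 0 R|lborel. (1 / norm x - 2 / R) * \<rho> x)"
  have LI: "LI = enn2real A - enn2real Q"
  proof -
    define f1 where "f1 x = (1/norm x - 1/R) * \<rho>r x" for x :: "real^2"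
    have mf1[measurable]: "f1 \<in> borel_measurable lborel" unfolding f1_def by measurable
    have AE0: "AE x in lborel. 0 \<le> f1 x"
      using AE_lborel_singleton[of "0::real^2"]
    proof eventually_elim
      case (elim x)
      show ?case
      proof (cases "x \<in> ball 0 R")
        case True then have "1/R \<le> 1/norm x" using elim R by (simp add: frac_le)
        then show ?thesis unfolding f1_def using \<rho>r0[of x] by simp
      qed (simp add: f1_def \<rho>r_out)
    qed
    have nnA: "(\<integral>\<^sup>+x. ennreal (f1 x) \<partial>lborel) = A"
      unfolding A_def
    proof (rule nn_integral_cong_AE)
      show "AE x in lborel. ennreal (f1 x) = indicator (ball 0 R) x * ennreal (1/norm x - 1/R) * ennreal (\<rho>r x)"
        using AE_lborel_singleton[of "0::real^2"]
      proof eventually_elim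
        case (elim x)
        show ?case
        proof (cases "x \<in> ball 0 R")
          case True then have "1/R \<le> 1/norm x" using elim R by (simp add: frac_le)
          then show ?thesis unfolding f1_def using \<rho>r0[of x] True by (simp add: ennreal_mult)
        qed (simp add: f1_def \<rho>r_out)
      qed
    qed
    have intf1: "integrable lborel f1"
      by (rule integrableI_nonneg[OF mf1 AE0]) (metis nnA Afin)
    have if1: "integral\<^sup>L lborel f1 = enn2real A"
      using nn_integral_eq_integral[OF intf1 AE0] integral_nonneg_AE[OF AE0] nnA by simp
    have AE1: "AE x in lborel. 0 \<le> \<rho>r x" using \<rho>r0 by simp
    have intr: "integrable lborel \<rho>r"
      by (rule integrableI_nonneg) (use Pfin AE1 in \<open>auto simp: P_def\<close>)
    have ir: "integral\<^sup>L lborel \<rho>r = enn2real P"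
      using nn_integral_eq_integral[OF intr AE1] integral_nonneg_AE[OF AE1] unfolding P_def by simp
    have "LI = integral\<^sup>L lborel (\<lambda>x. f1 x - \<rho>r x / R)"
      unfolding LI_def set_lebesgue_integral_def
      by (intro Bochner_Integration.integral_cong) (auto simp: f1_def \<rho>r_def indicator_def field_simps)
    also have "\<dots> = enn2real A - enn2real P / R"
      using intf1 intr by (simp add: if1 ir)
    also have "enn2real P / R = enn2real Q" using R by (simp add: PQ enn2real_mult)
    finally show ?thesis .
  qed
  have LIE: "\<bar>LI\<bar> \<le> enn2real G1"
  proof -
    have "enn2real A \<le> enn2real (Q + E)" by (rule enn2real_mono[OF AQE]) (use Qfin Efin in simp)
    also have "\<dots> = enn2real Q + enn2real E" using Qfin Efin by (simp add: enn2real_plus)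
    finally have 1: "enn2real A \<le> enn2real Q + enn2real E" .
    have "enn2real Q \<le> enn2real (A + E)" by (rule enn2real_mono[OF QAE]) (use Afin Efin in simp)
    also have "\<dots> = enn2real A + enn2real E" using Afin Efin by (simp add: enn2real_plus)
    finally have 2: "enn2real Q \<le> enn2real A + enn2real E" .
    have 3: "enn2real E \<le> enn2real G1" by (rule enn2real_mono[OF EG]) (use G1fin in simp)
    show ?thesis using 1 2 3 unfolding LI by linarith
  qed
  have \<alpha>0: "\<alpha> > 0" using g1 g3 unfolding al by (intro divide_pos_pos) auto
  have \<delta>1: "\<delta> > 1" using g1 unfolding de by (simp add: less_divide_eq)
  have ex: "(1 - \<alpha>) * \<delta> = 3/2" proof - have "\<gamma> - 1 \<noteq> 0" "\<gamma> \<noteq> 0" using g1 by auto then show ?thesis unfolding al de by (simp add: field_simps) qed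
  define Gr where "Gr x = (if \<rho>r x > 0 then (\<alpha> * \<rho>r x powr (\<alpha> - 1) * norm (gr x)) powr \<gamma> else 0)" for x
  have mGr[measurable]: "Gr \<in> borel_measurable borel" unfolding Gr_def by measurable
  have Gr0: "Gr x \<ge> 0" for x by (simp add: Gr_def)
  have eqG: "(\<integral>\<^sup>+ x\<in>ball 0 R. ennreal (if \<rho> x > 0 then norm (grad (\<lambda>y. \<rho> y powr \<alpha>) x) powr \<gamma> else 0) \<partial>lborel)
      = (\<integral>\<^sup>+x. ennreal (Gr x) \<partial>lborel)"
  proof (intro nn_integral_cong)
    fix x :: "real^2"
    show "ennreal (if \<rho> x > 0 then norm (grad (\<lambda>y. \<rho> y powr \<alpha>) x) powr \<gamma> else 0) * indicator (ball 0 R) x = ennreal (Gr x)"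
    proof (cases "x \<in> ball 0 R")
      case False then show ?thesis by (simp add: Gr_def \<rho>r_out)
    next
      case True
      show ?thesis
      proof (cases "\<rho> x > 0")
        case pos: True
        have "norm (grad (\<lambda>y. \<rho> y powr \<alpha>) x) = \<alpha> * \<rho> x powr (\<alpha> - 1) * norm (grad \<rho> x)"
          using grad_powr[OF der[OF True] pos, of \<alpha>] \<alpha>0 by simp
        then show ?thesis using True pos by (simp add: Gr_def \<rho>r_in gr_in)
      qed (use True in \<open>simp add: Gr_def \<rho>r_in\<close>)
    qed
  qed
  have eqR: "(\<integral>\<^sup>+ x\<in>ball 0 R. ennreal (\<rho> x powr (3/2)) \<partial>lborel) = (\<integral>\<^sup>+x. ennreal (\<rho>r x powr (3/2)) \<partial>lborel)"
    by (intro nn_integral_cong) (auto simp: \<rho>r_def indicator_def)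
  have pw: "a * b * \<alpha> * norm (gr x) \<le> a powr \<gamma> / \<gamma> * Gr x + b powr \<delta> / \<delta> * \<rho>r x powr (3/2)" for x
  proof (cases "\<rho>r x > 0")
    case True
    define u where "u = \<alpha> * \<rho>r x powr (\<alpha> - 1) * norm (gr x)"
    define v where "v = \<rho>r x powr (1 - \<alpha>)"
    have u0: "u \<ge> 0" unfolding u_def using \<alpha>0 by simp
    have v0: "v \<ge> 0" unfolding v_def by simp
    have "(a * u) * (b * v) \<le> a powr \<gamma> / \<gamma> * u powr \<gamma> + b powr (\<gamma>/(\<gamma>-1)) / (\<gamma>/(\<gamma>-1)) * v powr (\<gamma>/(\<gamma>-1))"
      by (rule young_pt[OF a b u0 v0 g1])
    also have "v powr (\<gamma>/(\<gamma>-1)) = \<rho>r x powr (3/2)"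
      unfolding v_def using ex de by (simp only: powr_powr)
    also have "u powr \<gamma> = Gr x" using True by (simp add: Gr_def u_def)
    also have "(a * u) * (b * v) = a * b * \<alpha> * norm (gr x) * (\<rho>r x powr (\<alpha> - 1) * \<rho>r x powr (1 - \<alpha>))"
      by (simp add: u_def v_def algebra_simps)
    also have "\<rho>r x powr (\<alpha> - 1) * \<rho>r x powr (1 - \<alpha>) = 1"
      using True by (simp add: powr_add[symmetric])
    finally show ?thesis using de by simp
  next
    case False
    then have z: "\<rho>r x = 0" using \<rho>r0[of x] by simp
    have "gr x = 0"
    proof (cases "x \<in> ball 0 R")
      case True
      then have "\<rho> x = 0" using z by (simp add: \<rho>r_in)
      then have "grad \<rho> x = 0"
        by (intro grad_zero_at_min[OF der[OF True] open_ball True nonneg])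
      then show ?thesis using True by (simp add: gr_in)
    qed (simp add: gr_out)
    then show ?thesis using Gr0[of x] a b g1 \<delta>1 by (simp add: z)
  qed
  have G1e: "G1 = ennreal (enn2real G1)" using G1fin by simp
  have mgn[measurable]: "(\<lambda>x. norm (gr x)) \<in> borel_measurable borel" by measurable
  have "ennreal (a * b * \<alpha> * \<bar>LINT x:ball 0 R|lborel. (1 / norm x - 2 / R) * \<rho> x\<bar>)
      \<le> ennreal (a * b * \<alpha> * enn2real G1)"
    using LIE a b \<alpha>0 unfolding LI_def by (intro ennreal_leI mult_left_mono) auto
  also have "\<dots> = ennreal (a * b * \<alpha>) * G1"
    using a b \<alpha>0 by (subst G1e) (simp add: ennreal_mult)
  also have "\<dots> = (\<integral>\<^sup>+x. ennreal (a * b * \<alpha> * norm (gr x)) \<partial>lborel)"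
    unfolding G1_def using a b \<alpha>0 by (simp add: nn_integral_cmult ennreal_mult)
  also have "\<dots> \<le> (\<integral>\<^sup>+x. ennreal (a powr \<gamma> / \<gamma>) * ennreal (Gr x) + ennreal (b powr \<delta> / \<delta>) * ennreal (\<rho>r x powr (3/2)) \<partial>lborel)"
  proof (intro nn_integral_mono)
    fix x :: "real^2"
    have "ennreal (a * b * \<alpha> * norm (gr x)) \<le> ennreal (a powr \<gamma> / \<gamma> * Gr x + b powr \<delta> / \<delta> * \<rho>r x powr (3/2))"
      by (rule ennreal_leI[OF pw])
    also have "\<dots> = ennreal (a powr \<gamma> / \<gamma>) * ennreal (Gr x) + ennreal (b powr \<delta> / \<delta>) * ennreal (\<rho>r x powr (3/2))"
    proof -
      have p1: "ennreal (a powr \<gamma> / \<gamma> * Gr x) = ennreal (a powr \<gamma> / \<gamma>) * ennreal (Gr x)"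
        by (rule ennreal_mult) (use g1 Gr0[of x] in auto)
      have p2: "ennreal (b powr \<delta> / \<delta> * \<rho>r x powr (3/2)) = ennreal (b powr \<delta> / \<delta>) * ennreal (\<rho>r x powr (3/2))"
        by (rule ennreal_mult) (use \<delta>1 in auto)
      have p3: "ennreal (a powr \<gamma> / \<gamma> * Gr x + b powr \<delta> / \<delta> * \<rho>r x powr (3/2))
          = ennreal (a powr \<gamma> / \<gamma> * Gr x) + ennreal (b powr \<delta> / \<delta> * \<rho>r x powr (3/2))"
        by (rule ennreal_plus) (use g1 Gr0[of x] \<delta>1 in auto)
      show ?thesis unfolding p3 p1 p2 ..
    qed
    finally show "ennreal (a * b * \<alpha> * norm (gr x)) \<le> ennreal (a powr \<gamma> / \<gamma>) * ennreal (Gr x) + ennreal (b powr \<delta> / \<delta>) * ennreal (\<rho>r x powr (3/2))" .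
  qed
  also have "\<dots> = ennreal (a powr \<gamma> / \<gamma>) * (\<integral>\<^sup>+x. ennreal (Gr x) \<partial>lborel) + ennreal (b powr \<delta> / \<delta>) * (\<integral>\<^sup>+x. ennreal (\<rho>r x powr (3/2)) \<partial>lborel)"
    by (simp add: nn_integral_add nn_integral_cmult)
  also have "\<dots> \<le> ennreal (a powr \<gamma> * Cconst \<gamma> / \<gamma>) * (\<integral>\<^sup>+x. ennreal (Gr x) \<partial>lborel) + ennreal (b powr \<delta> * Cconst \<delta> / \<delta>) * (\<integral>\<^sup>+x. ennreal (\<rho>r x powr (3/2)) \<partial>lborel)"
  proof (intro add_mono mult_right_mono ennreal_leI)
    show "a powr \<gamma> / \<gamma> \<le> a powr \<gamma> * Cconst \<gamma> / \<gamma>"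
      using Cconst_ge1[of \<gamma>] g1 by (intro divide_right_mono) (auto intro: mult_le_cancel_left1[THEN iffD2])
    show "b powr \<delta> / \<delta> \<le> b powr \<delta> * Cconst \<delta> / \<delta>"
      using Cconst_ge1[of \<delta>] \<delta>1 by (intro divide_right_mono) (auto intro: mult_le_cancel_left1[THEN iffD2])
  qed auto
  finally show ?thesis unfolding eqG eqR .
qed

theorem theorem3p1:
  fixes R \<gamma> :: real and \<rho> :: "real^2 \<Rightarrow> real"
  assumes "R > 0" and "1 < \<gamma>" and "\<gamma> < 3"
    and "\<exists>U. open U \<and> cball 0 R \<subseteq> U \<and> smooth_on U \<rho>"
    and "\<forall>x\<in>cball 0 R. \<rho> x \<ge> 0"
  shows "\<forall>a b :: real. a > 0 \<longrightarrow> b > 0 \<longrightarrow>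
    (let \<alpha> = (3 - \<gamma>) / (2 * \<gamma>); \<delta> = \<gamma> / (\<gamma> - 1) in
      ennreal (a * b * \<alpha> * \<bar>LINT x:ball 0 R|lborel. (1 / norm x - 2 / R) * \<rho> x\<bar>)
      \<le> ennreal (a powr \<gamma> * Cconst \<gamma> / \<gamma>) *
          (\<integral>\<^sup>+ x\<in>ball 0 R. ennreal (if \<rho> x > 0
               then norm (grad (\<lambda>y. \<rho> y powr \<alpha>) x) powr \<gamma> else 0) \<partial>lborel)
        + ennreal (b powr \<delta> * Cconst \<delta> / \<delta>) *
          (\<integral>\<^sup>+ x\<in>ball 0 R. ennreal (\<rho> x powr (3/2)) \<partial>lborel))"
  unfolding Let_def
proof (intro allI impI)
  fix a b :: real assume "a > 0" "b > 0"
  then show "ennreal (a * b * ((3 - \<gamma>) / (2 * \<gamma>)) * \<bar>LINT x:ball 0 R|lborel. (1 / norm x - 2 / R) * \<rho> x\<bar>)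
      \<le> ennreal (a powr \<gamma> * Cconst \<gamma> / \<gamma>) *
          (\<integral>\<^sup>+ x\<in>ball 0 R. ennreal (if \<rho> x > 0
               then norm (grad (\<lambda>y. \<rho> y powr ((3 - \<gamma>) / (2 * \<gamma>))) x) powr \<gamma> else 0) \<partial>lborel)
        + ennreal (b powr (\<gamma> / (\<gamma> - 1)) * Cconst (\<gamma> / (\<gamma> - 1)) / (\<gamma> / (\<gamma> - 1))) *
          (\<integral>\<^sup>+ x\<in>ball 0 R. ennreal (\<rho> x powr (3/2)) \<partial>lborel)"
    by (rule main_ineq[OF assms refl refl])
qed

end
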